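(* Let $(X,X')$ be an exchangeable pair of random elements, and let $W=W(X)$ and $W'=W(X')$ be integer valued. Define $Q_m(x)=\mathbb{P}[W'=W+m\mid X=x]$ and $q_m=\mathbb{E}Q_m(X)=\mathbb{P}[W'=W+m]$. Then for every positive integer $m$ (with $q_m>0$), \[ D_{1,m}(\mathcal{L}(W))\le\frac{\sqrt{\mathrm{Var}\,Q_m(X)}+\sqrt{\mathrm{Var}\,Q_{-m}(X)}}{q_m}. \]
   Context: For $f:\mathbb{Z}\to\mathbb{R}$, $\|f\|_1=\sum_i|f(i)|$; $\Delta^0f=f$, $\Delta^{n+1}f(k)=\Delta^nf(k+1)-\Delta^nf(k)$. For an integer-valued random variable $W$ with distribution function $F(j)=\mathbb{P}[W\le j]$ and positive integer $m$, $\bar F^m(j)=\frac{F(j)+\dots+F(j-m+1)}{m}$ and $D_{n,m}(\mathcal{L}(W))=m\|\Delta^{n+1}\bar F^m\|_1$. *)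

theory Defs
  imports "HOL-Probability.Probability"
begin

fun fdiff :: "nat \<Rightarrow> (int \<Rightarrow> real) \<Rightarrow> int \<Rightarrow> real" where
  "fdiff 0 f = f"
| "fdiff (Suc n) f = (\<lambda>k. fdiff n f (k + 1) - fdiff n f k)"

definition norm1 :: "(int \<Rightarrow> real) \<Rightarrow> real" where
  "norm1 f = (\<Sum>\<^sub>\<infinity> i\<in>(UNIV::int set). \<bar>f i\<bar>)"

definition cdf_int :: "int measure \<Rightarrow> int \<Rightarrow> real" where
  "cdf_int L j = measure L {..j}"

definition Fbar :: "nat \<Rightarrow> (int \<Rightarrow> real) \<Rightarrow> int \<Rightarrow> real" where
  "Fbar m F j = (\<Sum>i<m. F (j - int i)) / real m"

definition D_nm :: "nat \<Rightarrow> nat \<Rightarrow> int measure \<Rightarrow> real" where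
  "D_nm n m L = real m * norm1 (fdiff (Suc n) (Fbar m (cdf_int L)))"

end

theory Submission
  imports Defs
begin

lemma abs_dev_le_sqrt_var:
  fixes Y :: "'a \<Rightarrow> real"
  assumes P: "prob_space M" and iY: "integrable M Y" and iY2: "integrable M (\<lambda>x. (Y x)^2)"
  shows "(\<integral>x. \<bar>Y x - prob_space.expectation M Y\<bar> \<partial>M) \<le> sqrt (prob_space.variance M Y)"
proof -
  interpret prob_space M by fact
  define c where "c = expectation Y"
  define Z where "Z = (\<lambda>x. \<bar>Y x - c\<bar>)"
  have iZ: "integrable M Z" unfolding Z_def using iY by auto
  have eq: "(\<lambda>x. (Z x)^2) = (\<lambda>x. (Y x)^2 - 2 * c * Y x + c^2)"
    unfolding Z_def by (auto simp: power2_eq_square algebra_simps)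
  have iZ2: "integrable M (\<lambda>x. (Z x)^2)" unfolding eq using iY iY2 by auto
  have "0 \<le> variance Z" by (rule variance_positive)
  also have "\<dots> = expectation (\<lambda>x. (Z x)^2) - (expectation Z)^2"
    by (rule variance_eq[OF iZ iZ2])
  finally have "(expectation Z)^2 \<le> expectation (\<lambda>x. (Z x)^2)" by simp
  moreover have "(\<lambda>x. (Z x)^2) = (\<lambda>x. (Y x - c)^2)" unfolding Z_def by simp
  ultimately have "(expectation Z)^2 \<le> variance Y" unfolding c_def by simp
  hence "sqrt ((expectation Z)^2) \<le> sqrt (variance Y)" by (rule real_sqrt_le_mono)
  moreover have "expectation Z \<ge> 0" unfolding Z_def by simp
  ultimately show ?thesis unfolding Z_def c_def by simp
qed

lemma telescope:
  fixes G :: "int \<Rightarrow> real"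
  shows "(\<Sum>i<m. G (k + 1 - int i) - G (k - int i)) = G (k+1) - G (k + 1 - int m)"
  by (induction m) (auto simp: algebra_simps)

lemma Fbar_diff:
  fixes G :: "int \<Rightarrow> real"
  assumes "m > 0"
  shows "Fbar m G (k+1) - Fbar m G k = (G (k+1) - G (k + 1 - int m)) / real m"
proof -
  have "Fbar m G (k+1) - Fbar m G k = (\<Sum>i<m. G (k + 1 - int i) - G (k - int i)) / real m"
    unfolding Fbar_def sum_subtractf by (simp add: diff_divide_distrib add_divide_distrib algebra_simps)
  then show ?thesis using telescope by simp
qed

lemma fdiff2_Fbar:
  fixes G :: "int \<Rightarrow> real"
  assumes "m > 0"
  shows "real m * fdiff 2 (Fbar m G) k = (G (k+2) - G (k+1)) - (G (k + 2 - int m) - G (k + 1 - int m))"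
proof -
  have "fdiff 2 (Fbar m G) k = (Fbar m G (k+1+1) - Fbar m G (k+1)) - (Fbar m G (k+1) - Fbar m G k)"
    by (simp add: numeral_2_eq_2)
  also have "\<dots> = (G (k+2) - G (k + 2 - int m)) / real m - (G (k+1) - G (k + 1 - int m)) / real m"
    using Fbar_diff[OF assms, of G "k+1"] Fbar_diff[OF assms, of G k] by (simp add: algebra_simps)
  finally have h: "fdiff 2 (Fbar m G) k = ((G (k+2) - G (k+1)) - (G (k + 2 - int m) - G (k + 1 - int m))) / real m"
    by (simp add: diff_divide_distrib add_divide_distrib algebra_simps)
  show ?thesis unfolding h using assms by simp
qed

lemma dev_bound:
  fixes Q :: "'a \<Rightarrow> real"
  assumes "finite_measure M" "A \<in> sets M" "integrable M Q"
  shows "\<bar>c * measure M A - (\<integral>x. indicator A x * Q x \<partial>M)\<bar> \<le> (\<integral>x. indicator A x * \<bar>Q x - c\<bar> \<partial>M)"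
proof -
  interpret finite_measure M by fact
  have i1: "integrable M (\<lambda>x. indicator A x * c)"
    using assms(2) by (intro integrable_mult_left) (simp add: emeasure_eq_measure)
  have i2: "integrable M (\<lambda>x. indicator A x * Q x)"
    using integrable_mult_indicator[OF assms(2,3)] by simp
  have "(\<integral>x. indicator A x * c \<partial>M) = c * measure M A"
    using assms(2) by simp
  hence "c * measure M A - (\<integral>x. indicator A x * Q x \<partial>M) = (\<integral>x. indicator A x * (c - Q x) \<partial>M)"
    using i1 i2 assms(2) sets.sets_into_space[OF assms(2)] by (simp add: integral_diff[symmetric] right_diff_distrib Int_absorb2)
  also have "\<bar>\<dots>\<bar> \<le> (\<integral>x. \<bar>indicator A x * (c - Q x)\<bar> \<partial>M)"
    by (rule integral_abs_bound)
  also have "(\<lambda>x. \<bar>indicator A x * (c - Q x)\<bar>) = (\<lambda>x. indicator A x * \<bar>Q x - c\<bar>)"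
    by (auto simp: indicator_def abs_minus_commute)
  finally show ?thesis .
qed

lemma sum_ind_le:
  fixes f :: "'a \<Rightarrow> real" and g :: "'a \<Rightarrow> int"
  assumes "integrable M f" "\<And>x. 0 \<le> f x" "finite J" and [measurable]: "g \<in> measurable M (count_space UNIV)"
  shows "(\<Sum>j\<in>J. \<integral>x. indicator {\<omega>\<in>space M. g \<omega> = j} x * f x \<partial>M) \<le> (\<integral>x. f x \<partial>M)"
proof -
  have ii: "integrable M (\<lambda>x. indicator {\<omega>\<in>space M. g \<omega> = j} x * f x)" for j
    using integrable_mult_indicator[OF _ assms(1), of "{\<omega>\<in>space M. g \<omega> = j}"] by simp
  have "(\<Sum>j\<in>J. \<integral>x. indicator {\<omega>\<in>space M. g \<omega> = j} x * f x \<partial>M)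
      = (\<integral>x. (\<Sum>j\<in>J. indicator {\<omega>\<in>space M. g \<omega> = j} x * f x) \<partial>M)"
    using Bochner_Integration.integral_sum[where I=J and f="\<lambda>j x. indicator {\<omega>\<in>space M. g \<omega> = j} x * f x", OF ii] by simp
  also have "\<dots> \<le> (\<integral>x. f x \<partial>M)"
  proof (rule integral_mono)
    show "integrable M (\<lambda>x. \<Sum>j\<in>J. indicator {\<omega>\<in>space M. g \<omega> = j} x * f x)" using ii by auto
    show "integrable M f" by fact
    fix x
    have "(\<Sum>j\<in>J. indicator {\<omega>\<in>space M. g \<omega> = j} x * f x)
        = (\<Sum>j\<in>J. if j = g x then (if x \<in> space M then f x else 0) else 0)"
      by (rule sum.cong) (auto simp: indicator_def)
    also have "\<dots> = (if g x \<in> J then (if x \<in> space M then f x else 0) else 0)"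
      using assms(3) by (simp add: sum.delta')
    also have "\<dots> \<le> f x" using assms(2)[of x] by auto
    finally show "(\<Sum>j\<in>J. indicator {\<omega>\<in>space M. g \<omega> = j} x * f x) \<le> f x" .
  qed
  finally show ?thesis .
qed

lemma exch_meas:
  assumes X: "X \<in> measurable M N" and X': "X' \<in> measurable M N"
    and exch: "distr M (N \<Otimes>\<^sub>M N) (\<lambda>\<omega>. (X \<omega>, X' \<omega>)) = distr M (N \<Otimes>\<^sub>M N) (\<lambda>\<omega>. (X' \<omega>, X \<omega>))"
    and S: "S \<in> sets (N \<Otimes>\<^sub>M N)"
  shows "measure M {\<omega>\<in>space M. (X \<omega>, X' \<omega>) \<in> S} = measure M {\<omega>\<in>space M. (X' \<omega>, X \<omega>) \<in> S}"
proof -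
  have m1: "(\<lambda>\<omega>. (X \<omega>, X' \<omega>)) \<in> measurable M (N \<Otimes>\<^sub>M N)" using X X' by measurable
  have m2: "(\<lambda>\<omega>. (X' \<omega>, X \<omega>)) \<in> measurable M (N \<Otimes>\<^sub>M N)" using X X' by measurable
  have "measure M {\<omega>\<in>space M. (X \<omega>, X' \<omega>) \<in> S} = measure (distr M (N \<Otimes>\<^sub>M N) (\<lambda>\<omega>. (X \<omega>, X' \<omega>))) S"
    using measure_distr[OF m1 S] by (simp add: Int_def conj_commute)
  also have "\<dots> = measure (distr M (N \<Otimes>\<^sub>M N) (\<lambda>\<omega>. (X' \<omega>, X \<omega>))) S" by (simp add: exch)
  also have "\<dots> = measure M {\<omega>\<in>space M. (X' \<omega>, X \<omega>) \<in> S}"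
    using measure_distr[OF m2 S] by (simp add: Int_def conj_commute)
  finally show ?thesis .
qed

theorem theorem3:
  fixes M :: "'a measure" and N :: "'b measure"
    and X X' :: "'a \<Rightarrow> 'b" and W :: "'b \<Rightarrow> int" and m :: nat
  assumes "prob_space M"
    and X_meas: "X \<in> measurable M N" and X'_meas: "X' \<in> measurable M N"
    and W_meas: "W \<in> measurable N (count_space UNIV)"
    and exch: "distr M (N \<Otimes>\<^sub>M N) (\<lambda>\<omega>. (X \<omega>, X' \<omega>))
             = distr M (N \<Otimes>\<^sub>M N) (\<lambda>\<omega>. (X' \<omega>, X \<omega>))"
    and m_pos: "m > 0"
    and q_pos: "measure M {\<omega>\<in>space M. W (X' \<omega>) = W (X \<omega>) + int m} > 0"
  shows "(let QmX = real_cond_exp M (vimage_algebra (space M) X N)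
                  (indicator {\<omega>\<in>space M. W (X' \<omega>) = W (X \<omega>) + int m});
              QnmX = real_cond_exp M (vimage_algebra (space M) X N)
                  (indicator {\<omega>\<in>space M. W (X' \<omega>) = W (X \<omega>) - int m});
              qm = measure M {\<omega>\<in>space M. W (X' \<omega>) = W (X \<omega>) + int m};
              L = distr M (count_space UNIV) (\<lambda>\<omega>. W (X \<omega>))
          in (\<lambda>k. \<bar>fdiff 2 (Fbar m (cdf_int L)) k\<bar>) summable_on UNIV
             \<and> D_nm 1 m L
               \<le> (sqrt (prob_space.variance M QmX) + sqrt (prob_space.variance M QnmX)) / qm)"
proof -
  interpret prob_space M by fact
  note [measurable] = X_meas X'_meas W_meas
  define F where "F = vimage_algebra (space M) X N"
  define Em where "Em = {\<omega>\<in>space M. W (X' \<omega>) = W (X \<omega>) + int m}"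
  define En where "En = {\<omega>\<in>space M. W (X' \<omega>) = W (X \<omega>) - int m}"
  define Qm where "Qm = real_cond_exp M F (indicator Em)"
  define Qn where "Qn = real_cond_exp M F (indicator En)"
  define q where "q = measure M Em"
  define L where "L = distr M (count_space UNIV) (\<lambda>\<omega>. W (X \<omega>))"
  define A where "A j = {\<omega>\<in>space M. W (X \<omega>) = j}" for j
  define p where "p j = measure M (A j)" for j
  have Em_sets[measurable]: "Em \<in> sets M" unfolding Em_def by measurable
  have En_sets[measurable]: "En \<in> sets M" unfolding En_def by measurable
  have A_sets: "A j \<in> sets M" for j unfolding A_def by measurable
  have subalg: "subalgebra M F"
    unfolding subalgebra_def F_def using X_meas[unfolded measurable_iff_sets] by auto
  interpret S: finite_measure_subalgebra M F
    by unfold_locales (rule subalg)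
  have AF: "A j \<in> sets F" for j
  proof -
    have "A j = X -` (W -` {j} \<inter> space N) \<inter> space M"
      unfolding A_def using measurable_space[OF X_meas] by auto
    moreover have "W -` {j} \<inter> space N \<in> sets N" by measurable
    ultimately show ?thesis unfolding F_def using in_vimage_algebra by metis
  qed
  have iEm: "integrable M (indicator Em :: _ \<Rightarrow> real)" by (rule integrable_real_indicator[OF Em_sets]) (simp add: emeasure_eq_measure)
  have iEn: "integrable M (indicator En :: _ \<Rightarrow> real)" by (rule integrable_real_indicator[OF En_sets]) (simp add: emeasure_eq_measure)
  have iQm: "integrable M Qm" unfolding Qm_def using S.real_cond_exp_int(1)[OF iEm] .
  have iQn: "integrable M Qn" unfolding Qn_def using S.real_cond_exp_int(1)[OF iEn] .
  have EQm: "expectation Qm = q" unfolding Qm_def q_def using S.real_cond_exp_int(2)[OF iEm] by simp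
  have qn: "measure M En = q"
  proof -
    have "measure M {\<omega>\<in>space M. (X \<omega>, X' \<omega>) \<in> {z\<in>space (N \<Otimes>\<^sub>M N). W (snd z) = W (fst z) + int m}}
        = measure M {\<omega>\<in>space M. (X' \<omega>, X \<omega>) \<in> {z\<in>space (N \<Otimes>\<^sub>M N). W (snd z) = W (fst z) + int m}}"
      by (rule exch_meas[OF X_meas X'_meas exch]) measurable
    moreover have "{\<omega>\<in>space M. (X \<omega>, X' \<omega>) \<in> {z\<in>space (N \<Otimes>\<^sub>M N). W (snd z) = W (fst z) + int m}} = Em"
      unfolding Em_def using measurable_space[OF X_meas] measurable_space[OF X'_meas]
      by (auto simp: space_pair_measure)
    moreover have "{\<omega>\<in>space M. (X' \<omega>, X \<omega>) \<in> {z\<in>space (N \<Otimes>\<^sub>M N). W (snd z) = W (fst z) + int m}} = En"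
      unfolding En_def using measurable_space[OF X_meas] measurable_space[OF X'_meas]
      by (auto simp: space_pair_measure)
    ultimately show ?thesis unfolding q_def by simp
  qed
  have EQn: "expectation Qn = q" unfolding Qn_def using S.real_cond_exp_int(2)[OF iEn] qn by simp
  have intA: "(\<integral>x. indicator (A j) x * real_cond_exp M F (indicator E) x \<partial>M) = measure M (A j \<inter> E)"
    if E: "E \<in> sets M" for j E
  proof -
    have iE: "integrable M (indicator E :: _ \<Rightarrow> real)" by (rule integrable_real_indicator[OF E]) (simp add: emeasure_eq_measure)
    have "(\<integral>x \<in> A j. indicator E x \<partial>M) = (\<integral>x \<in> A j. real_cond_exp M F (indicator E) x \<partial>M)"
      by (rule S.real_cond_exp_intA[OF iE AF])
    moreover have "(\<integral>x \<in> A j. indicator E x \<partial>M) = measure M (A j \<inter> E)"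
      unfolding set_lebesgue_integral_def
      using A_sets[of j] E sets.sets_into_space[OF A_sets[of j]]
      by (simp add: indicator_inter_arith[symmetric] Int_absorb2 Int_assoc[symmetric] Int_commute)
    ultimately show ?thesis unfolding set_lebesgue_integral_def by simp
  qed
  have exj: "measure M (A (j - int m) \<inter> Em) = measure M (A j \<inter> En)" for j
  proof -
    have "measure M {\<omega>\<in>space M. (X \<omega>, X' \<omega>) \<in> {z\<in>space (N \<Otimes>\<^sub>M N). W (fst z) = j - int m \<and> W (snd z) = j}}
        = measure M {\<omega>\<in>space M. (X' \<omega>, X \<omega>) \<in> {z\<in>space (N \<Otimes>\<^sub>M N). W (fst z) = j - int m \<and> W (snd z) = j}}"
      by (rule exch_meas[OF X_meas X'_meas exch]) measurable
    moreover have "{\<omega>\<in>space M. (X \<omega>, X' \<omega>) \<in> {z\<in>space (N \<Otimes>\<^sub>M N). W (fst z) = j - int m \<and> W (snd z) = j}} = A (j - int m) \<inter> Em"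
      unfolding Em_def A_def using measurable_space[OF X_meas] measurable_space[OF X'_meas]
      by (auto simp: space_pair_measure)
    moreover have "{\<omega>\<in>space M. (X' \<omega>, X \<omega>) \<in> {z\<in>space (N \<Otimes>\<^sub>M N). W (fst z) = j - int m \<and> W (snd z) = j}} = A j \<inter> En"
      unfolding En_def A_def using measurable_space[OF X_meas] measurable_space[OF X'_meas]
      by (auto simp: space_pair_measure)
    ultimately show ?thesis by simp
  qed
  define cm where "cm j = (\<integral>x. indicator (A j) x * \<bar>Qm x - q\<bar> \<partial>M)" for j
  define cn where "cn j = (\<integral>x. indicator (A j) x * \<bar>Qn x - q\<bar> \<partial>M)" for j
  define Bm where "Bm = (\<integral>x. \<bar>Qm x - q\<bar> \<partial>M)"
  define Bn where "Bn = (\<integral>x. \<bar>Qn x - q\<bar> \<partial>M)"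
  have pt: "\<bar>q * (p j - p (j - int m))\<bar> \<le> cn j + cm (j - int m)" for j
  proof -
    have d1: "\<bar>q * p j - measure M (A j \<inter> En)\<bar> \<le> cn j"
      using dev_bound[OF finite_measure_axioms A_sets[of j] iQn, of q] intA[OF En_sets, of j]
      unfolding cn_def p_def Qn_def by (simp add: finite_measure_axioms)
    have d2: "\<bar>q * p (j - int m) - measure M (A (j - int m) \<inter> Em)\<bar> \<le> cm (j - int m)"
      using dev_bound[OF finite_measure_axioms A_sets[of "j - int m"] iQm, of q] intA[OF Em_sets, of "j - int m"]
      unfolding cm_def p_def Qm_def by (simp add: finite_measure_axioms)
    show ?thesis using d1 d2 exj[of j] by (simp add: right_diff_distrib)
  qed
  have gm[measurable]: "(\<lambda>\<omega>. W (X \<omega>)) \<in> measurable M (count_space UNIV)" by measurable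
  have sumbound: "(\<Sum>j\<in>J. \<bar>p j - p (j - int m)\<bar>) \<le> (Bm + Bn) / q" if J: "finite J" for J
  proof -
    have qp: "q > 0" using q_pos unfolding q_def Em_def .
    have "q * (\<Sum>j\<in>J. \<bar>p j - p (j - int m)\<bar>) = (\<Sum>j\<in>J. \<bar>q * (p j - p (j - int m))\<bar>)"
      using qp by (simp add: sum_distrib_left abs_mult)
    also have "\<dots> \<le> (\<Sum>j\<in>J. cn j + cm (j - int m))" by (rule sum_mono) (rule pt)
    also have "\<dots> = (\<Sum>j\<in>J. cn j) + (\<Sum>i\<in>(\<lambda>j. j - int m) ` J. cm i)"
      by (simp add: sum.distrib sum.reindex inj_on_def)
    also have "(\<Sum>j\<in>J. cn j) \<le> Bn"
      unfolding cn_def Bn_def A_def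
      by (rule sum_ind_le) (use iQn J in auto)
    also have "(\<Sum>i\<in>(\<lambda>j. j - int m) ` J. cm i) \<le> Bm"
      unfolding cm_def Bm_def A_def
      by (rule sum_ind_le) (use iQm J in auto)
    finally have "q * (\<Sum>j\<in>J. \<bar>p j - p (j - int m)\<bar>) \<le> Bm + Bn" by simp
    thus ?thesis using qp by (simp add: field_simps)
  qed
  have bnd: "AE x in M. 0 \<le> real_cond_exp M F (indicator E) x \<and> real_cond_exp M F (indicator E) x \<le> 1"
    if E: "E \<in> sets M" for E
  proof -
    have iE: "integrable M (indicator E :: _ \<Rightarrow> real)" by (rule integrable_real_indicator[OF E]) (simp add: emeasure_eq_measure)
    have "AE x in M. 0 \<le> real_cond_exp M F (indicator E) x"
      by (rule S.real_cond_exp_pos) (use E in auto)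
    moreover have "AE x in M. real_cond_exp M F (indicator E) x \<le> 1"
      by (rule S.real_cond_exp_le_c[OF iE]) (auto simp: indicator_def)
    ultimately show ?thesis by eventually_elim auto
  qed
  have sq: "integrable M (\<lambda>x. (real_cond_exp M F (indicator E) x)^2)" if E: "E \<in> sets M" for E
  proof (rule Bochner_Integration.integrable_bound[where f="\<lambda>_. 1::real"])
    show "integrable M (\<lambda>_. 1::real)" by simp
    show "(\<lambda>x. (real_cond_exp M F (indicator E) x)^2) \<in> borel_measurable M" by measurable
    show "AE x in M. norm ((real_cond_exp M F (indicator E) x)^2) \<le> norm (1::real)"
      using bnd[OF E] by eventually_elim (auto simp: power_le_one)
  qed
  have Bm_le: "Bm \<le> sqrt (variance Qm)"
    using abs_dev_le_sqrt_var[OF prob_space_axioms iQm sq[OF Em_sets, folded Qm_def]] EQm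
    unfolding Bm_def by simp
  have Bn_le: "Bn \<le> sqrt (variance Qn)"
    using abs_dev_le_sqrt_var[OF prob_space_axioms iQn sq[OF En_sets, folded Qn_def]] EQn
    unfolding Bn_def by simp
  define G where "G j = measure M {\<omega>\<in>space M. W (X \<omega>) \<le> j}" for j
  have cdfG: "cdf_int L = G"
  proof
    fix j
    have "cdf_int L j = measure M ((\<lambda>\<omega>. W (X \<omega>)) -` {..j} \<inter> space M)"
      unfolding cdf_int_def L_def by (rule measure_distr) auto
    also have "(\<lambda>\<omega>. W (X \<omega>)) -` {..j} \<inter> space M = {\<omega>\<in>space M. W (X \<omega>) \<le> j}" by auto
    finally show "cdf_int L j = G j" unfolding G_def .
  qed
  have Gp: "G t - G (t - 1) = p t" for t
  proof -
    have "{\<omega>\<in>space M. W (X \<omega>) \<le> t} = {\<omega>\<in>space M. W (X \<omega>) \<le> t - 1} \<union> A t" by (auto simp: A_def)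
    moreover have "{\<omega>\<in>space M. W (X \<omega>) \<le> t - 1} \<inter> A t = {}" by (auto simp: A_def)
    moreover have "{\<omega>\<in>space M. W (X \<omega>) \<le> t - 1} \<in> sets M" by measurable
    ultimately have "G t = G (t-1) + p t" unfolding G_def p_def
      using A_sets[of t] by (simp add: finite_measure_Union)
    thus ?thesis by simp
  qed
  define h where "h k = \<bar>fdiff 2 (Fbar m (cdf_int L)) k\<bar>" for k
  have hk: "h k = \<bar>p (k+2) - p (k+2-int m)\<bar> / real m" for k
  proof -
    have g1: "G (k+2) - G (k+1) = p (k+2)" using Gp[of "k+2"] by (simp add: add.commute)
    have g2: "G (k + 2 - int m) - G (k + 1 - int m) = p (k+2-int m)" using Gp[of "k+2-int m"] by (simp add: algebra_simps)
    have "real m * fdiff 2 (Fbar m G) k = p (k+2) - p (k+2-int m)"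
      using fdiff2_Fbar[OF m_pos, of G k] g1 g2 by simp
    hence "fdiff 2 (Fbar m G) k = (p (k+2) - p (k+2-int m)) / real m"
      using m_pos by (simp add: field_simps)
    thus ?thesis unfolding h_def cdfG by simp
  qed
  have qp: "q > 0" using q_pos unfolding q_def Em_def .
  have fs: "sum h K \<le> (Bm + Bn) / q / real m" if K: "finite K" for K
  proof -
    have "sum h K = (\<Sum>k\<in>K. \<bar>p (k+2) - p (k+2-int m)\<bar>) / real m"
      unfolding hk by (simp add: sum_divide_distrib)
    also have "(\<Sum>k\<in>K. \<bar>p (k+2) - p (k+2-int m)\<bar>) = (\<Sum>j\<in>(\<lambda>k. k+2) ` K. \<bar>p j - p (j - int m)\<bar>)"
      by (simp add: sum.reindex inj_on_def)
    also have "\<dots> \<le> (Bm + Bn) / q" by (rule sumbound) (use K in simp)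
    finally show ?thesis using m_pos by (simp add: divide_right_mono)
  qed
  have hnn: "h k \<ge> 0" for k unfolding h_def by simp
  have summ: "h summable_on UNIV"
    by (rule nonneg_bdd_above_summable_on) (use hnn fs in \<open>auto intro!: bdd_aboveI\<close>)
  have inf_le: "infsum h UNIV \<le> (Bm + Bn) / q / real m"
    by (rule infsum_le_finite_sums[OF summ]) (use fs in auto)
  have "D_nm 1 m L = real m * infsum h UNIV"
    unfolding D_nm_def norm1_def h_def by (simp add: numeral_2_eq_2)
  also have "\<dots> \<le> real m * ((Bm + Bn) / q / real m)"
    by (rule mult_left_mono[OF inf_le]) simp
  also have "\<dots> = (Bm + Bn) / q" using m_pos by simp
  also have "\<dots> \<le> (sqrt (variance Qm) + sqrt (variance Qn)) / q"
    using Bm_le Bn_le qp by (simp add: divide_right_mono)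
  finally have Dle: "D_nm 1 m L \<le> (sqrt (variance Qm) + sqrt (variance Qn)) / q" .
  have main: "h summable_on UNIV \<and> D_nm 1 m L \<le> (sqrt (variance Qm) + sqrt (variance Qn)) / q"
    using summ Dle by simp
  show ?thesis
    using main unfolding Let_def h_def Qm_def Qn_def F_def q_def Em_def En_def L_def .
qed

end
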